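(* Let $q\ge 3$. The following hold. (1) If $\mathbf u\in\mathbb R^2$ is such that the orbit $G_q\mathbf u=\{A\mathbf u: A\in G_q\}$ is a discrete subset of $\mathbb R^2$, then either $\mathbf u=(0,0)^T$ or there is a nonzero $\alpha\in\mathbb R$ with $G_q\mathbf u=\alpha\Lambda_q$. (2) No element $\mathbf v\in\Lambda_q$ satisfies $Q_q(\mathbf v)<1$, where $Q_q((x,y)^T)=x^2-\lambda_q xy+y^2$; i.e. the open interior of the ellipse $Q_q=1$ contains no element of $\Lambda_q$. (3) $\mathfrak w_i^q\wedge\mathfrak w_{i+1}^q=1$ for $i=0,1,\dots,q-2$, and $\mathfrak w_0^q\wedge\mathfrak w_{q-1}^q=1$. (4) If $\mathbf u_0,\mathbf u_1\in\Lambda_q$ satisfy $\mathbf u_0\wedge\mathbf u_1=1$, then there exists $A\in G_q$ with $A\mathbf u_0=(1,0)^T$ and $A\mathbf u_1=(0,1)^T$; equivalently, the matrix with columns $\mathbf u_0,\mathbf u_1$ belongs to $G_q$. Thus unimodular pairs of elements of $\Lambda_q$ are exactly the column pairs of matrices in $G_q$.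
   Context: Fix an integer $q\ge3$, let $\lambda_q=2\cos(\pi/q)$, and let $G_q\subset \mathrm{SL}(2,\mathbb R)$ be the Hecke triangle group generated by $S=\begin{pmatrix}0&-1\\1&0\end{pmatrix}$ and $T_q=\begin{pmatrix}1&\lambda_q\\0&1\end{pmatrix}$, acting linearly on $\mathbb R^2$ (column vectors). Set $\Lambda_q=G_q(1,0)^T=\{A(1,0)^T:A\in G_q\}$. Let $U_q=T_qS=\begin{pmatrix}\lambda_q&-1\\1&0\end{pmatrix}$ and $\mathfrak w_i^q=(x_i^q,y_i^q)^T=U_q^i(1,0)^T$ for $i=0,1,\dots,2q-1$ (so $\mathfrak w_0^q=(1,0)^T$, $\mathfrak w_1^q=(\lambda_q,1)^T$, $\mathfrak w_{q-1}^q=(0,1)^T$). For $\mathbf u_0=(x_0,y_0)^T,\mathbf u_1=(x_1,y_1)^T$, the wedge product is $\mathbf u_0\wedge\mathbf u_1=x_0y_1-x_1y_0$; the pair is called unimodular if $\mathbf u_0\wedge\mathbf u_1=1$. *)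

theory Defs
  imports "HOL-Analysis.Analysis"
begin

text \<open>Vectors in R^2 are real^2 (components 1 and 2); 2x2 matrices are real^2^2 (rows).\<close>

definition vec2 :: "real \<Rightarrow> real \<Rightarrow> real^2" where
  "vec2 x y = vector [x, y]"

definition mat2 :: "real \<Rightarrow> real \<Rightarrow> real \<Rightarrow> real \<Rightarrow> real^2^2" where
  "mat2 a b c d = vector [vector [a, b], vector [c, d]]"

definition hecke_lambda :: "nat \<Rightarrow> real" where
  "hecke_lambda q = 2 * cos (pi / real q)"

definition hecke_S :: "real^2^2" where
  "hecke_S = mat2 0 (-1) 1 0"

definition hecke_T :: "nat \<Rightarrow> real^2^2" where
  "hecke_T q = mat2 1 (hecke_lambda q) 0 1"

text \<open>The Hecke group G_q: the subgroup of SL(2,R) generated by S and T_q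
  (closure of the identity under left multiplication by S, T_q and their inverses).\<close>
inductive_set hecke_group :: "nat \<Rightarrow> (real^2^2) set" for q :: nat where
  id: "mat 1 \<in> hecke_group q"
| S: "A \<in> hecke_group q \<Longrightarrow> hecke_S ** A \<in> hecke_group q"
| T: "A \<in> hecke_group q \<Longrightarrow> hecke_T q ** A \<in> hecke_group q"
| S_inv: "A \<in> hecke_group q \<Longrightarrow> matrix_inv hecke_S ** A \<in> hecke_group q"
| T_inv: "A \<in> hecke_group q \<Longrightarrow> matrix_inv (hecke_T q) ** A \<in> hecke_group q"

definition orbit :: "nat \<Rightarrow> real^2 \<Rightarrow> (real^2) set" where
  "orbit q u = (\<lambda>A. A *v u) ` hecke_group q"

definition hecke_Lambda :: "nat \<Rightarrow> (real^2) set" where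
  "hecke_Lambda q = orbit q (vec2 1 0)"

definition hecke_Q :: "nat \<Rightarrow> real^2 \<Rightarrow> real" where
  "hecke_Q q v = (v$1)^2 - hecke_lambda q * (v$1) * (v$2) + (v$2)^2"

definition hecke_U :: "nat \<Rightarrow> real^2^2" where
  "hecke_U q = hecke_T q ** hecke_S"

text \<open>w_i = U_q^i (1,0)^T\<close>
definition hecke_w :: "nat \<Rightarrow> nat \<Rightarrow> real^2" where
  "hecke_w q i = (((*v) (hecke_U q)) ^^ i) (vec2 1 0)"

definition wedge :: "real^2 \<Rightarrow> real^2 \<Rightarrow> real" where
  "wedge u v = u$1 * v$2 - v$1 * u$2"

end

theory Submission
  imports Defs
begin


lemma vec2_nth[simp]: "vec2 x y $ 1 = x" "vec2 x y $ 2 = y"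
  by (simp_all add: vec2_def)

lemma vec2_eta: "v = vec2 (v$1) (v$2)"
  by (simp add: vec_eq_iff forall_2)

lemma vec2_eq_iff: "vec2 a b = vec2 c d \<longleftrightarrow> a = c \<and> b = d"
  by (auto simp: vec_eq_iff forall_2)

lemma mat2_nth[simp]: "mat2 a b c d $ 1 = vec2 a b" "mat2 a b c d $ 2 = vec2 c d"
  by (simp_all add: mat2_def vec2_def)

lemma mat2_mulv[simp]: "mat2 a b c d *v vec2 x y = vec2 (a*x+b*y) (c*x+d*y)"
  by (simp add: vec_eq_iff forall_2 matrix_vector_mult_def sum_2)

lemma mat2_eta: "(A::real^2^2) = mat2 (A$1$1) (A$1$2) (A$2$1) (A$2$2)"
  by (simp add: vec_eq_iff forall_2)

lemma mat2_mul[simp]: "mat2 a b c d ** mat2 a' b' c' d' = mat2 (a*a'+b*c') (a*b'+b*d') (c*a'+d*c') (c*b'+d*d')"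
  by (simp add: vec_eq_iff forall_2 matrix_matrix_mult_def sum_2)

lemma mat1_eq: "(mat 1 :: real^2^2) = mat2 1 0 0 1"
  by (simp add: vec_eq_iff forall_2 mat_def)

lemma matrix_inv_eq: fixes A B :: "real^2^2"
  assumes "A ** B = mat 1" "B ** A = mat 1" shows "matrix_inv A = B"
proof -
  have ex: "\<exists>A'. A ** A' = mat 1 \<and> A' ** A = mat 1" using assms by blast
  define C where "C = matrix_inv A"
  have C: "A ** C = mat 1 \<and> C ** A = mat 1" unfolding C_def matrix_inv_def
    by (rule someI_ex[OF ex])
  have "C = C ** (A ** B)" using assms by simp
  also have "\<dots> = (C ** A) ** B" by (simp add: matrix_mul_assoc)
  also have "\<dots> = B" using C by simp
  finally show ?thesis unfolding C_def .
qed

lemma Sinv: "matrix_inv hecke_S = mat2 0 1 (-1) 0"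
  by (rule matrix_inv_eq) (simp_all add: hecke_S_def mat1_eq)

lemma Tinv: "matrix_inv (hecke_T q) = mat2 1 (- hecke_lambda q) 0 1"
  by (rule matrix_inv_eq) (simp_all add: hecke_T_def mat1_eq)

lemma norm_vec2: "norm (vec2 x y) = sqrt (x^2 + y^2)"
  by (simp add: norm_vec_def L2_set_def sum_2)



lemma lam_bounds: assumes "q \<ge> 3" shows "1 \<le> hecke_lambda q" "hecke_lambda q < 2"
proof -
  have q: "real q \<ge> 3" using assms by simp
  have p0: "0 < pi / real q" using q by simp
  have p1: "pi / real q \<le> pi / 3" using q by (intro divide_left_mono) auto
  have "cos (pi/3) \<le> cos (pi / real q)"
    using p0 p1 by (intro cos_monotone_0_pi_le) auto
  then show "1 \<le> hecke_lambda q" by (simp add: hecke_lambda_def cos_60)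
  have p3: "pi / 3 \<le> pi" using pi_gt_zero by simp
  have p4: "pi / real q \<le> pi" using p1 p3 by linarith
  have "cos (pi / real q) < cos 0"
    using p0 p4 by (intro cos_monotone_0_pi) auto
  then show "hecke_lambda q < 2" by (simp add: hecke_lambda_def)
qed

definition ss :: "nat \<Rightarrow> int \<Rightarrow> real" where
  "ss q k = sin (real_of_int k * pi / real q) / sin (pi / real q)"

lemma sinpos: assumes "q \<ge> 3" shows "sin (pi / real q) > 0"
  using assms by (intro sin_gt_zero) (auto simp: field_simps)

lemma ss_rec: assumes "q \<ge> 3" shows "ss q (k+2) = hecke_lambda q * ss q (k+1) - ss q k"
proof -
  have qp: "real q \<noteq> 0" using assms by simp
  define t where "t = pi / real q"
  define a where "a = real_of_int (k+1) * t"
  have 1: "real_of_int (k+2) * pi / real q = a + t" using qp by (simp add: a_def t_def field_simps)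
  have 2: "real_of_int k * pi / real q = a - t" using qp by (simp add: a_def t_def field_simps)
  have 3: "real_of_int (k+1) * pi / real q = a" by (simp add: a_def t_def)
  have "sin (a + t) = 2 * cos t * sin a - sin (a - t)"
    by (simp add: sin_add sin_diff)
  then show ?thesis unfolding ss_def hecke_lambda_def 1 2 3 t_def[symmetric]
    by (simp add: diff_divide_distrib)
qed

lemma ss_0: "ss q 0 = 0" by (simp add: ss_def)
lemma ss_1: assumes "q \<ge> 3" shows "ss q 1 = 1" using sinpos[OF assms] by (simp add: ss_def)
lemma ss_m1: assumes "q \<ge> 3" shows "ss q (-1) = -1" using sinpos[OF assms] by (simp add: ss_def)
lemma ss_q: assumes "q \<ge> 3" shows "ss q (int q) = 0" using assms by (simp add: ss_def)
lemma ss_qm1: assumes "q \<ge> 3" shows "ss q (int q - 1) = 1"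
proof -
  have "real_of_int (int q - 1) * pi / real q = pi - pi / real q" using assms
    by (simp add: field_simps of_nat_diff)
  then show ?thesis using sinpos[OF assms] by (simp add: ss_def)
qed
lemma ss_qp1: assumes "q \<ge> 3" shows "ss q (int q + 1) = -1"
proof -
  have "real_of_int (int q + 1) * pi / real q = pi + pi / real q" using assms
    by (simp add: field_simps)
  then show ?thesis using sinpos[OF assms] by (simp add: ss_def sin_add)
qed
lemma ss_nonneg: assumes "q \<ge> 3" "0 \<le> k" "k \<le> int q" shows "ss q k \<ge> 0"
proof -
  have "0 \<le> real_of_int k * pi / real q" using assms by simp
  moreover have "real_of_int k * pi / real q \<le> pi" using assms
    by (simp add: field_simps mult_right_mono)
  ultimately have "sin (real_of_int k * pi / real q) \<ge> 0" by (rule sin_ge_zero)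
  then show ?thesis using sinpos[OF assms(1)] by (simp add: ss_def)
qed

definition uU :: "nat \<Rightarrow> real^2 \<Rightarrow> real^2" where
  "uU q v = vec2 (hecke_lambda q * v$1 - v$2) (v$1)"

lemma U_mulv: "hecke_U q *v v = uU q v"
  by (subst vec2_eta[of v]) (simp add: hecke_U_def hecke_T_def hecke_S_def uU_def)

lemma uU_pow: assumes "q \<ge> 3" shows
  "(uU q ^^ k) v = vec2 (ss q (int k+1) * v$1 - ss q (int k) * v$2) (ss q (int k) * v$1 - ss q (int k - 1) * v$2)"
proof (induction k)
  case 0 then show ?case using ss_1[OF assms] ss_m1[OF assms] by (simp add: ss_0 vec2_eta[symmetric])
next
  case (Suc k)
  have r1: "ss q (int k + 2) = hecke_lambda q * ss q (int k + 1) - ss q (int k)"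
    using ss_rec[OF assms, of "int k"] by simp
  have r2: "ss q (int k + 1) = hecke_lambda q * ss q (int k) - ss q (int k - 1)"
  proof -
    have e: "int k - 1 + 2 = int k + 1" "int k - 1 + 1 = int k" by simp_all
    show ?thesis using ss_rec[OF assms, of "int k - 1"] unfolding e .
  qed
  have a: "int (Suc k) + 1 = int k + 2" "int (Suc k) = int k + 1" "int (Suc k) - 1 = int k" by simp_all
  have "(uU q ^^ Suc k) v = uU q ((uU q ^^ k) v)" by simp
  also have "\<dots> = vec2 (hecke_lambda q * (ss q (int k + 1) * v $ 1 - ss q (int k) * v $ 2) - (ss q (int k) * v $ 1 - ss q (int k - 1) * v $ 2))
      (ss q (int k + 1) * v $ 1 - ss q (int k) * v $ 2)" unfolding Suc.IH uU_def by simp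
  also have "\<dots> = vec2 (ss q (int k + 2) * v $ 1 - ss q (int k + 1) * v $ 2) (ss q (int k + 1) * v $ 1 - ss q (int k) * v $ 2)"
  proof -
    have key: "\<And>(l::real) (a::real) (b::real) (c::real) (d::real) (e::real) (f::real). c = l*b - a \<Longrightarrow> b = l*a - d \<Longrightarrow> l*(b*e - a*f) - (a*e - d*f) = c*e - b*f"
      by algebra
    show ?thesis unfolding vec2_eq_iff by (intro conjI key[OF r1 r2] refl)
  qed
  finally have fin: "(uU q ^^ Suc k) v = vec2 (ss q (int k + 2) * v $ 1 - ss q (int k + 1) * v $ 2) (ss q (int k + 1) * v $ 1 - ss q (int k) * v $ 2)" .
  have b: "int k + 1 + 1 = int k + 2" "int k + 1 - 1 = int k" by simp_all
  show ?case unfolding of_nat_Suc b using fin by (simp add: add.commute)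
qed

lemma uU_q: assumes "q \<ge> 3" shows "(uU q ^^ q) v = - v"
  using ss_q[OF assms] ss_qp1[OF assms] ss_qm1[OF assms]
  by (subst uU_pow[OF assms]) (simp add: vec_eq_iff forall_2 add.commute[of 1])

lemma uU_qm1: assumes "q \<ge> 3" shows "(uU q ^^ (q-1)) (vec2 1 0) = vec2 0 1"
proof -
  have "int (q-1) = int q - 1" "int (q-1) + 1 = int q" using assms by auto
  then show ?thesis using ss_q[OF assms] ss_qm1[OF assms] by (simp add: uU_pow[OF assms])
qed

lemma w_eq: "hecke_w q i = (uU q ^^ i) (vec2 1 0)"
proof -
  have "(*v) (hecke_U q) = uU q" by (rule ext) (simp add: U_mulv)
  then show ?thesis by (simp add: hecke_w_def)
qed

definition QQ :: "nat \<Rightarrow> real \<Rightarrow> real \<Rightarrow> real" where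
  "QQ q x y = x^2 - hecke_lambda q * x * y + y^2"

lemma Q_eq: "hecke_Q q v = QQ q (v$1) (v$2)" by (simp add: hecke_Q_def QQ_def)

lemma Q_uU: "hecke_Q q (uU q v) = hecke_Q q v"
  by (simp add: hecke_Q_def uU_def power2_eq_square algebra_simps)

lemma Q_uU_pow: "hecke_Q q ((uU q ^^ k) v) = hecke_Q q v"
  by (induction k) (simp_all add: Q_uU)

lemma wedge_uU: "wedge v (uU q v) = hecke_Q q v"
  by (simp add: hecke_Q_def uU_def wedge_def power2_eq_square algebra_simps)

lemma part3a: assumes "q \<ge> 3" shows "wedge (hecke_w q i) (hecke_w q (i + 1)) = 1"
proof -
  have "hecke_w q (i+1) = uU q (hecke_w q i)" by (simp add: w_eq)
  moreover have "hecke_Q q (hecke_w q i) = 1" by (simp add: w_eq Q_uU_pow) (simp add: hecke_Q_def)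
  ultimately show ?thesis by (simp add: wedge_uU)
qed

lemma part3b: assumes "q \<ge> 3" shows "wedge (hecke_w q 0) (hecke_w q (q - 1)) = 1"
  using uU_qm1[OF assms] by (simp add: w_eq wedge_def)



definition sS :: "real^2 \<Rightarrow> real^2" where "sS v = vec2 (-(v$2)) (v$1)"

lemma S_mulv: "hecke_S *v v = sS v"
  by (subst vec2_eta[of v]) (simp add: hecke_S_def sS_def)
lemma Sinv_mulv: "matrix_inv hecke_S *v v = - sS v"
  by (subst vec2_eta[of v]) (simp add: Sinv sS_def vec_eq_iff forall_2)
lemma T_mulv: "hecke_T q *v v = vec2 (v$1 + hecke_lambda q * v$2) (v$2)"
  by (subst vec2_eta[of v]) (simp add: hecke_T_def)
lemma Tinv_mulv: "matrix_inv (hecke_T q) *v v = vec2 (v$1 - hecke_lambda q * v$2) (v$2)"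
  by (subst vec2_eta[of v]) (simp add: Tinv)

lemma G_mul: "A \<in> hecke_group q \<Longrightarrow> B \<in> hecke_group q \<Longrightarrow> A ** B \<in> hecke_group q"
proof (induction A rule: hecke_group.induct)
  case id then show ?case by simp
next
  case (S A) then show ?case using hecke_group.S[OF S.IH[OF S.prems]] by (simp add: matrix_mul_assoc)
next
  case (T A) then show ?case using hecke_group.T[OF T.IH[OF T.prems]] by (simp add: matrix_mul_assoc)
next
  case (S_inv A) then show ?case using hecke_group.S_inv[OF S_inv.IH[OF S_inv.prems]] by (simp add: matrix_mul_assoc)
next
  case (T_inv A) then show ?case using hecke_group.T_inv[OF T_inv.IH[OF T_inv.prems]] by (simp add: matrix_mul_assoc)
qed

lemma G_S: "hecke_S \<in> hecke_group q"
  using hecke_group.S[OF hecke_group.id, of q] by simp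
lemma G_T: "hecke_T q \<in> hecke_group q"
  using hecke_group.T[OF hecke_group.id, of q] by simp
lemma G_Sinv: "matrix_inv hecke_S \<in> hecke_group q"
  using hecke_group.S_inv[OF hecke_group.id, of q] by simp
lemma G_Tinv: "matrix_inv (hecke_T q) \<in> hecke_group q"
  using hecke_group.T_inv[OF hecke_group.id, of q] by simp

lemma SinvS: "matrix_inv hecke_S ** hecke_S = mat 1" "hecke_S ** matrix_inv hecke_S = mat 1"
  unfolding Sinv by (simp_all add: hecke_S_def mat1_eq)
lemma TinvT: "matrix_inv (hecke_T q) ** hecke_T q = mat 1" "hecke_T q ** matrix_inv (hecke_T q) = mat 1"
  unfolding Tinv by (simp_all add: hecke_T_def mat1_eq)

lemma G_linv: "A \<in> hecke_group q \<Longrightarrow> \<exists>C\<in>hecke_group q. C ** A = mat 1"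
proof (induction A rule: hecke_group.induct)
  case id then show ?case using hecke_group.id by force
next
  case (S A)
  then obtain C where C: "C \<in> hecke_group q" "C ** A = mat 1" by blast
  have "(C ** matrix_inv hecke_S) ** (hecke_S ** A) = C ** ((matrix_inv hecke_S ** hecke_S) ** A)"
    by (simp add: matrix_mul_assoc)
  also have "\<dots> = mat 1" using C SinvS by simp
  finally show ?case using G_mul[OF C(1) G_Sinv] by blast
next
  case (T A)
  then obtain C where C: "C \<in> hecke_group q" "C ** A = mat 1" by blast
  have "(C ** matrix_inv (hecke_T q)) ** (hecke_T q ** A) = C ** ((matrix_inv (hecke_T q) ** hecke_T q) ** A)"
    by (simp add: matrix_mul_assoc)
  also have "\<dots> = mat 1" using C TinvT by simp
  finally show ?case using G_mul[OF C(1) G_Tinv] by blast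
next
  case (S_inv A)
  then obtain C where C: "C \<in> hecke_group q" "C ** A = mat 1" by blast
  have "(C ** hecke_S) ** (matrix_inv hecke_S ** A) = C ** ((hecke_S ** matrix_inv hecke_S) ** A)"
    by (simp add: matrix_mul_assoc)
  also have "\<dots> = mat 1" using C SinvS by simp
  finally show ?case using G_mul[OF C(1) G_S] by blast
next
  case (T_inv A)
  then obtain C where C: "C \<in> hecke_group q" "C ** A = mat 1" by blast
  have "(C ** hecke_T q) ** (matrix_inv (hecke_T q) ** A) = C ** ((hecke_T q ** matrix_inv (hecke_T q)) ** A)"
    by (simp add: matrix_mul_assoc)
  also have "\<dots> = mat 1" using C TinvT by simp
  finally show ?case using G_mul[OF C(1) G_T] by blast
qed

lemma G_wedge: "A \<in> hecke_group q \<Longrightarrow> wedge (A *v v) (A *v w) = wedge v w"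
proof (induction A arbitrary: v w rule: hecke_group.induct)
  case id then show ?case by simp
next
  case (S A) then show ?case
    by (simp add: matrix_vector_mul_assoc[symmetric] S_mulv sS_def wedge_def algebra_simps)
next
  case (T A) then show ?case
    by (simp add: matrix_vector_mul_assoc[symmetric] T_mulv wedge_def algebra_simps)
next
  case (S_inv A) then show ?case
    by (simp add: matrix_vector_mul_assoc[symmetric] Sinv_mulv sS_def wedge_def algebra_simps)
next
  case (T_inv A) then show ?case
    by (simp add: matrix_vector_mul_assoc[symmetric] Tinv_mulv wedge_def algebra_simps)
qed

lemma G_Tpow_nat: "mat2 1 (real n * hecke_lambda q) 0 1 \<in> hecke_group q"
proof (induction n)
  case 0 then show ?case using hecke_group.id[of q] by (simp add: mat1_eq)
next
  case (Suc n)
  have "hecke_T q ** mat2 1 (real n * hecke_lambda q) 0 1 = mat2 1 (real (Suc n) * hecke_lambda q) 0 1"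
    by (simp add: hecke_T_def algebra_simps)
  then show ?case using hecke_group.T[OF Suc] by simp
qed

lemma G_Tpow_neg: "mat2 1 (- real n * hecke_lambda q) 0 1 \<in> hecke_group q"
proof (induction n)
  case 0 then show ?case using hecke_group.id[of q] by (simp add: mat1_eq)
next
  case (Suc n)
  have "matrix_inv (hecke_T q) ** mat2 1 (- real n * hecke_lambda q) 0 1 = mat2 1 (- real (Suc n) * hecke_lambda q) 0 1"
    by (simp add: Tinv algebra_simps)
  then show ?case using hecke_group.T_inv[OF Suc] by simp
qed

lemma G_Tpow: "mat2 1 (real_of_int k * hecke_lambda q) 0 1 \<in> hecke_group q"
proof (cases "k \<ge> 0")
  case True
  then show ?thesis using G_Tpow_nat[of "nat k" q] by simp
next
  case False
  then show ?thesis using G_Tpow_neg[of "nat (-k)" q] by simp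
qed

lemma Lambda_iff: "v \<in> hecke_Lambda q \<longleftrightarrow> (\<exists>A\<in>hecke_group q. v = A *v vec2 1 0)"
  by (auto simp: hecke_Lambda_def orbit_def)

lemma Lambda_mul: "v \<in> hecke_Lambda q \<Longrightarrow> M \<in> hecke_group q \<Longrightarrow> M *v v \<in> hecke_Lambda q"
  unfolding Lambda_iff by (metis G_mul matrix_vector_mul_assoc)

(* part 2 *)

inductive_set Ch :: "nat \<Rightarrow> (real^2) set" for q :: nat where
  e: "vec2 1 0 \<in> Ch q"
| neg: "t \<in> Ch q \<Longrightarrow> - t \<in> Ch q"
| step: "t \<in> Ch q \<Longrightarrow> 1 \<le> a \<Longrightarrow> a \<le> q - 1 \<Longrightarrow> sS ((uU q ^^ a) t) \<in> Ch q"

definition WW :: "nat \<Rightarrow> (real^2) set" where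
  "WW q = {(uU q ^^ k) t | k t. t \<in> Ch q}"

lemma sign_lemma: assumes "q \<ge> 3" "t$1 * t$2 \<le> 0" "1 \<le> a" "a \<le> q - 1"
  shows "((uU q ^^ a) t)$1 * ((uU q ^^ a) t)$2 \<ge> 0"
proof -
  have s1: "ss q (int a + 1) \<ge> 0" "ss q (int a) \<ge> 0" "ss q (int a - 1) \<ge> 0"
    using assms by (auto intro!: ss_nonneg)
  define x where "x = t$1"
  define y where "y = t$2"
  have xy: "x \<le> 0 \<and> 0 \<le> y \<or> 0 \<le> x \<and> y \<le> 0" using assms(2) unfolding x_def y_def
    by (auto simp: mult_le_0_iff)
  have eq: "(uU q ^^ a) t = vec2 (ss q (int a + 1) * x - ss q (int a) * y) (ss q (int a) * x - ss q (int a - 1) * y)"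
    unfolding x_def y_def by (rule uU_pow[OF assms(1)])
  show ?thesis
  proof (cases "x \<le> 0 \<and> 0 \<le> y")
    case True
    have "ss q (int a + 1) * x \<le> 0" "ss q (int a) * y \<ge> 0" "ss q (int a) * x \<le> 0" "ss q (int a - 1) * y \<ge> 0"
      using True s1 by (simp_all add: mult_nonneg_nonpos mult_nonneg_nonneg)
    then have "ss q (int a + 1) * x - ss q (int a) * y \<le> 0" "ss q (int a) * x - ss q (int a - 1) * y \<le> 0"
      by linarith+
    then show ?thesis by (simp add: eq mult_nonpos_nonpos)
  next
    case False
    then have F: "0 \<le> x" "y \<le> 0" using xy by auto
    have "ss q (int a + 1) * x \<ge> 0" "ss q (int a) * y \<le> 0" "ss q (int a) * x \<ge> 0" "ss q (int a - 1) * y \<le> 0"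
      using F s1 by (simp_all add: mult_nonneg_nonpos mult_nonneg_nonneg)
    then have "ss q (int a + 1) * x - ss q (int a) * y \<ge> 0" "ss q (int a) * x - ss q (int a - 1) * y \<ge> 0"
      by linarith+
    then show ?thesis by (simp add: eq mult_nonneg_nonneg)
  qed
qed

lemma Ch_inv: assumes "q \<ge> 3" shows "t \<in> Ch q \<Longrightarrow> t$1 * t$2 \<le> 0 \<and> (t$1)^2 + (t$2)^2 \<ge> 1"
proof (induction t rule: Ch.induct)
  case e then show ?case by simp
next
  case (neg t) then show ?case by simp
next
  case (step t a)
  define z where "z = (uU q ^^ a) t"
  have lam: "hecke_lambda q \<ge> 0" using lam_bounds[OF assms] by simp
  have zz: "z$1 * z$2 \<ge> 0" unfolding z_def using sign_lemma[OF assms _ step.hyps(2,3)] step.IH by simp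
  have "hecke_Q q z = hecke_Q q t" unfolding z_def by (rule Q_uU_pow)
  moreover have "hecke_Q q t \<ge> (t$1)^2 + (t$2)^2"
    using step.IH lam unfolding hecke_Q_def
    by (simp add: mult_nonneg_nonpos mult.assoc)
  moreover have "hecke_Q q z \<le> (z$1)^2 + (z$2)^2"
    using zz lam unfolding hecke_Q_def
    by (simp add: mult_nonneg_nonneg mult.assoc)
  ultimately have "(z$1)^2 + (z$2)^2 \<ge> 1" using step.IH by linarith
  moreover have "(sS z)$1 * (sS z)$2 \<le> 0" using zz by (simp add: sS_def mult.commute)
  ultimately show ?case unfolding z_def[symmetric] by (simp add: sS_def add.commute)
qed



lemma uU_neg: "uU q (- v) = - uU q v"
  by (simp add: uU_def vec_eq_iff forall_2)
lemma uU_pow_neg: "(uU q ^^ k) (- v) = - (uU q ^^ k) v"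
  by (induction k) (simp_all add: uU_neg)

lemma uU_qj: assumes "q \<ge> 3" "t \<in> Ch q" shows "(uU q ^^ (q * j)) t \<in> Ch q"
proof (induction j)
  case 0 then show ?case using assms by simp
next
  case (Suc j)
  have "(uU q ^^ (q * Suc j)) t = (uU q ^^ q) ((uU q ^^ (q * j)) t)"
    by (simp add: funpow_add)
  also have "\<dots> = - (uU q ^^ (q * j)) t" by (rule uU_q[OF assms(1)])
  finally show ?case using Ch.neg[OF Suc] by simp
qed

lemma Ch_W: "t \<in> Ch q \<Longrightarrow> t \<in> WW q"
  unfolding WW_def by (metis (mono_tags, lifting) funpow_0 mem_Collect_eq)

lemma W_U: "v \<in> WW q \<Longrightarrow> uU q v \<in> WW q"
  unfolding WW_def by clarify (metis (mono_tags, lifting) comp_apply funpow.simps(2) mem_Collect_eq)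

lemma W_Upow: "v \<in> WW q \<Longrightarrow> (uU q ^^ k) v \<in> WW q"
  by (induction k) (simp_all add: W_U)

lemma W_neg: "v \<in> WW q \<Longrightarrow> - v \<in> WW q"
  unfolding WW_def by clarify (metis (mono_tags, lifting) Ch.neg uU_pow_neg mem_Collect_eq)

lemma Ch_S: assumes "q \<ge> 3" shows "t \<in> Ch q \<Longrightarrow> sS t \<in> WW q"
proof (induction t rule: Ch.induct)
  case e
  have "sS (vec2 1 0) = (uU q ^^ (q-1)) (vec2 1 0)" using uU_qm1[OF assms] by (simp add: sS_def)
  then show ?case using W_Upow[OF Ch_W[OF Ch.e]] by simp
next
  case (neg t)
  have "sS (-t) = - sS t" by (simp add: sS_def vec_eq_iff forall_2)
  then show ?case using W_neg[OF neg.IH] by simp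
next
  case (step t a)
  have "sS (sS ((uU q ^^ a) t)) = - (uU q ^^ a) t" by (simp add: sS_def vec_eq_iff forall_2)
  then show ?case using W_neg[OF W_Upow[OF Ch_W[OF step.hyps(1)]]] by simp
qed

lemma W_S: assumes "q \<ge> 3" "v \<in> WW q" shows "sS v \<in> WW q"
proof -
  obtain k t where v: "v = (uU q ^^ k) t" and t: "t \<in> Ch q" using assms(2) unfolding WW_def by blast
  define r where "r = k mod q"
  define j where "j = k div q"
  have k: "k = r + q * j" unfolding r_def j_def by simp
  define t' where "t' = (uU q ^^ (q * j)) t"
  have t': "t' \<in> Ch q" unfolding t'_def by (rule uU_qj[OF assms(1) t])
  have v': "v = (uU q ^^ r) t'" unfolding v t'_def k by (simp add: funpow_add)
  show ?thesis
  proof (cases "r = 0")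
    case True then show ?thesis using v' Ch_S[OF assms(1) t'] by simp
  next
    case False
    have "r < q" unfolding r_def using assms(1) by simp
    then have "sS v \<in> Ch q" unfolding v' using False by (intro Ch.step[OF t']) auto
    then show ?thesis by (rule Ch_W)
  qed
qed

lemma W_Uinv: assumes "q \<ge> 3" "v \<in> WW q"
  shows "vec2 (v$2) (hecke_lambda q * v$2 - v$1) \<in> WW q"
proof -
  have r: "ss q (int q) = hecke_lambda q * ss q (int q - 1) - ss q (int q - 2)"
    using ss_rec[OF assms(1), of "int q - 2"] by simp
  then have s2: "ss q (int q - 2) = hecke_lambda q" using ss_q[OF assms(1)] ss_qm1[OF assms(1)] by simp
  have e: "int (q - 1) + 1 = int q" "int (q-1) = int q - 1" "int (q - 1) - 1 = int q - 2" using assms(1) by auto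
  have "(uU q ^^ (q-1)) v = vec2 (- v$2) (v$1 - hecke_lambda q * v$2)"
    unfolding uU_pow[OF assms(1)] e using ss_q[OF assms(1)] ss_qm1[OF assms(1)] s2 by simp
  then have "vec2 (v$2) (hecke_lambda q * v$2 - v$1) = - (uU q ^^ (q-1)) v"
    by (simp add: vec_eq_iff forall_2)
  then show ?thesis using W_neg[OF W_Upow[OF assms(2)]] by simp
qed

lemma Lambda_W: assumes "q \<ge> 3" shows "A \<in> hecke_group q \<Longrightarrow> A *v vec2 1 0 \<in> WW q"
proof (induction A rule: hecke_group.induct)
  case id then show ?case using Ch_W[OF Ch.e] by simp
next
  case (S A) then show ?case by (simp add: matrix_vector_mul_assoc[symmetric] S_mulv W_S[OF assms])
next
  case (S_inv A) then show ?case
    by (simp add: matrix_vector_mul_assoc[symmetric] Sinv_mulv W_S[OF assms] W_neg)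
next
  case (T A)
  define v where "v = A *v vec2 1 0"
  have "hecke_T q *v v = uU q (- sS v)" by (simp add: T_mulv uU_def sS_def vec_eq_iff forall_2)
  moreover have "(hecke_T q ** A) *v vec2 1 0 = hecke_T q *v v" by (simp add: v_def matrix_vector_mul_assoc)
  ultimately show ?case using W_U[OF W_neg[OF W_S[OF assms T.IH]]] unfolding v_def by simp
next
  case (T_inv A)
  define v where "v = A *v vec2 1 0"
  have "matrix_inv (hecke_T q) *v v = sS (vec2 (v$2) (hecke_lambda q * v$2 - v$1))"
    by (simp add: Tinv_mulv sS_def)
  moreover have "(matrix_inv (hecke_T q) ** A) *v vec2 1 0 = matrix_inv (hecke_T q) *v v" by (simp add: v_def matrix_vector_mul_assoc)
  ultimately show ?case using W_S[OF assms W_Uinv[OF assms T_inv.IH]] unfolding v_def by simp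
qed

lemma W_Q: assumes "q \<ge> 3" "v \<in> WW q" shows "hecke_Q q v \<ge> 1"
proof -
  obtain k t where v: "v = (uU q ^^ k) t" and t: "t \<in> Ch q" using assms(2) unfolding WW_def by blast
  have lam: "hecke_lambda q \<ge> 0" using lam_bounds[OF assms(1)] by simp
  have i: "t$1 * t$2 \<le> 0" "(t$1)^2 + (t$2)^2 \<ge> 1" using Ch_inv[OF assms(1) t] by auto
  have "hecke_Q q t \<ge> (t$1)^2 + (t$2)^2"
    using i lam unfolding hecke_Q_def by (simp add: mult_nonneg_nonpos mult.assoc)
  then show ?thesis unfolding v Q_uU_pow using i by linarith
qed

lemma part2: assumes "q \<ge> 3" "v \<in> hecke_Lambda q" shows "hecke_Q q v \<ge> 1"
  using assms(2) Lambda_W[OF assms(1)] W_Q[OF assms(1)] unfolding Lambda_iff by blast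



lemma small_x: assumes "q \<ge> 3" "vec2 x 1 \<in> hecke_Lambda q" "\<bar>x\<bar> \<le> hecke_lambda q / 2"
  shows "x = 0"
proof (rule ccontr)
  assume x0: "x \<noteq> 0"
  have l: "1 \<le> hecke_lambda q" using lam_bounds[OF assms(1)] by simp
  show False
  proof (cases "x > 0")
    case True
    have "hecke_Q q (vec2 x 1) \<ge> 1" by (rule part2[OF assms(1,2)])
    moreover have "x * (x - hecke_lambda q) < 0" using True assms(3) l by (intro mult_pos_neg) auto
    ultimately show False by (simp add: hecke_Q_def power2_eq_square algebra_simps)
  next
    case False
    then have xn: "x < 0" using x0 by simp
    have "hecke_S *v vec2 x 1 \<in> hecke_Lambda q" by (rule Lambda_mul[OF assms(2) G_S])
    then have "hecke_Q q (vec2 (-1) x) \<ge> 1" using part2[OF assms(1)] by (simp add: S_mulv sS_def)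
    moreover have "x * (x + hecke_lambda q) < 0" using xn assms(3) l by (intro mult_neg_pos) auto
    ultimately show False by (simp add: hecke_Q_def power2_eq_square algebra_simps)
  qed
qed

lemma part4: assumes "q \<ge> 3" "u0 \<in> hecke_Lambda q" "u1 \<in> hecke_Lambda q" "wedge u0 u1 = 1"
  shows "(\<exists>A \<in> hecke_group q. A *v u0 = vec2 1 0 \<and> A *v u1 = vec2 0 1)
        \<and> mat2 (u0$1) (u1$1) (u0$2) (u1$2) \<in> hecke_group q"
proof -
  obtain A where A: "A \<in> hecke_group q" "u0 = A *v vec2 1 0" using assms(2) unfolding Lambda_iff by blast
  obtain C where C: "C \<in> hecke_group q" "C ** A = mat 1" using G_linv[OF A(1)] by blast
  have AC: "A ** C = mat 1" using C(2) matrix_left_right_inverse by blast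
  have Cu0: "C *v u0 = vec2 1 0" using A(2) C(2) by (simp add: matrix_vector_mul_assoc)
  define r where "r = C *v u1"
  have rL: "r \<in> hecke_Lambda q" unfolding r_def by (rule Lambda_mul[OF assms(3) C(1)])
  have "wedge (vec2 1 0) r = 1" using G_wedge[OF C(1), of u0 u1] assms(4) Cu0 r_def by simp
  then have r2: "r$2 = 1" by (simp add: wedge_def)
  define b where "b = r$1"
  have r: "r = vec2 b 1" using r2 vec2_eta[of r] b_def by simp
  define k where "k = round (b / hecke_lambda q)"
  have l: "1 \<le> hecke_lambda q" using lam_bounds[OF assms(1)] by simp
  define x where "x = b - real_of_int k * hecke_lambda q"
  have "\<bar>real_of_int k - b / hecke_lambda q\<bar> \<le> 1/2" unfolding k_def by (rule of_int_round_abs_le)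
  then have "\<bar>real_of_int k - b / hecke_lambda q\<bar> * hecke_lambda q \<le> 1/2 * hecke_lambda q"
    using l by (intro mult_right_mono) auto
  moreover have "\<bar>real_of_int k - b / hecke_lambda q\<bar> * hecke_lambda q = \<bar>x\<bar>"
  proof -
    have e: "(real_of_int k - b / hecke_lambda q) * hecke_lambda q = - x" unfolding x_def using l by (simp add: field_simps)
    have "\<bar>real_of_int k - b / hecke_lambda q\<bar> * hecke_lambda q = \<bar>(real_of_int k - b / hecke_lambda q) * hecke_lambda q\<bar>"
      using l by (simp add: abs_mult)
    then show ?thesis unfolding e by simp
  qed
  ultimately have xb: "\<bar>x\<bar> \<le> hecke_lambda q / 2" by simp
  define M where "M = mat2 1 (real_of_int (-k) * hecke_lambda q) 0 1"
  have M: "M \<in> hecke_group q" unfolding M_def by (rule G_Tpow)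
  have "M *v r = vec2 x 1" unfolding M_def r x_def by simp
  then have "vec2 x 1 \<in> hecke_Lambda q" using Lambda_mul[OF rL M] by simp
  then have x0: "x = 0" by (rule small_x[OF assms(1) _ xb])
  have Mr: "M *v r = vec2 0 1" using \<open>M *v r = vec2 x 1\<close> x0 by simp
  have Me: "M *v vec2 1 0 = vec2 1 0" unfolding M_def by simp
  have b: "b = real_of_int k * hecke_lambda q" using x0 x_def by simp
  have part_a: "\<exists>A \<in> hecke_group q. A *v u0 = vec2 1 0 \<and> A *v u1 = vec2 0 1"
  proof (intro bexI conjI)
    show "M ** C \<in> hecke_group q" by (rule G_mul[OF M C(1)])
    show "(M ** C) *v u0 = vec2 1 0" using Cu0 Me by (simp add: matrix_vector_mul_assoc[symmetric])
    show "(M ** C) *v u1 = vec2 0 1" using Mr r_def by (simp add: matrix_vector_mul_assoc[symmetric])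
  qed
  have u1: "u1 = A *v r" unfolding r_def using AC by (simp add: matrix_vector_mul_assoc)
  have eqm: "mat2 (u0$1) (u1$1) (u0$2) (u1$2) = A ** mat2 1 (real_of_int k * hecke_lambda q) 0 1"
    unfolding u1 A(2) r b by (subst (1 2 3 4 5) mat2_eta[of A]) (simp add: algebra_simps)
  show ?thesis using part_a eqm G_mul[OF A(1) G_Tpow] by simp
qed



lemma id_G: "mat 1 \<in> hecke_group q" by (rule hecke_group.id)

lemma orbit_cusp: assumes "A \<in> hecke_group q" "(A *v u)$2 = 0" "u \<noteq> 0"
  shows "\<exists>\<alpha>::real. \<alpha> \<noteq> 0 \<and> orbit q u = (\<lambda>v. \<alpha> *\<^sub>R v) ` hecke_Lambda q"
proof -
  obtain C where C: "C \<in> hecke_group q" "C ** A = mat 1" using G_linv[OF assms(1)] by blast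
  have AC: "A ** C = mat 1" using C(2) matrix_left_right_inverse by blast
  define x where "x = (A *v u)$1"
  have Au: "A *v u = x *\<^sub>R vec2 1 0" using vec2_eta[of "A *v u"] assms(2) x_def
    by (simp add: vec_eq_iff forall_2)
  have u: "u = x *\<^sub>R (C *v vec2 1 0)"
  proof -
    have "u = C *v (A *v u)" using C(2) by (simp add: matrix_vector_mul_assoc)
    also have "\<dots> = x *\<^sub>R (C *v vec2 1 0)" unfolding Au by (simp add: matrix_vector_mult_scaleR)
    finally show ?thesis .
  qed
  have x0: "x \<noteq> 0" using u assms(3) by auto
  have "orbit q u = (\<lambda>v. x *\<^sub>R v) ` hecke_Lambda q"
  proof
    show "orbit q u \<subseteq> (\<lambda>v. x *\<^sub>R v) ` hecke_Lambda q"
    proof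
      fix z assume "z \<in> orbit q u"
      then obtain B where B: "B \<in> hecke_group q" "z = B *v u" unfolding orbit_def by blast
      have "z = x *\<^sub>R ((B ** C) *v vec2 1 0)" unfolding B(2) u
        by (simp add: matrix_vector_mult_scaleR matrix_vector_mul_assoc)
      moreover have "(B ** C) *v vec2 1 0 \<in> hecke_Lambda q"
        unfolding Lambda_iff using G_mul[OF B(1) C(1)] by blast
      ultimately show "z \<in> (\<lambda>v. x *\<^sub>R v) ` hecke_Lambda q" by blast
    qed
    show "(\<lambda>v. x *\<^sub>R v) ` hecke_Lambda q \<subseteq> orbit q u"
    proof
      fix z assume "z \<in> (\<lambda>v. x *\<^sub>R v) ` hecke_Lambda q"
      then obtain w where w: "w \<in> hecke_Lambda q" "z = x *\<^sub>R w" by blast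
      then obtain B where B: "B \<in> hecke_group q" "z = x *\<^sub>R (B *v vec2 1 0)" unfolding Lambda_iff by blast
      have "z = (B ** A) *v u" unfolding B(2)
        by (simp add: matrix_vector_mul_assoc[symmetric] Au matrix_vector_mult_scaleR)
      then show "z \<in> orbit q u" unfolding orbit_def using G_mul[OF B(1) assms(1)] by blast
    qed
  qed
  then show ?thesis using x0 by blast
qed

lemma descent: assumes "q \<ge> 3" and H: "\<forall>A\<in>hecke_group q. (A *v u)$2 \<noteq> 0"
  shows "\<exists>A\<in>hecke_group q. \<bar>(A *v u)$2\<bar> \<le> (hecke_lambda q / 2)^N * \<bar>u$2\<bar>"
proof (induction N)
  case 0 then show ?case using id_G by force
next
  case (Suc N)
  then obtain A where A: "A \<in> hecke_group q" "\<bar>(A *v u)$2\<bar> \<le> (hecke_lambda q / 2)^N * \<bar>u$2\<bar>" by blast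
  define x where "x = (A *v u)$1"
  define y where "y = (A *v u)$2"
  have y0: "y \<noteq> 0" unfolding y_def using H A(1) by blast
  have l: "1 \<le> hecke_lambda q" using lam_bounds[OF assms(1)] by simp
  define k where "k = round (- x / (hecke_lambda q * y))"
  have "\<bar>real_of_int k - (- x / (hecke_lambda q * y))\<bar> \<le> 1/2" unfolding k_def by (rule of_int_round_abs_le)
  then have "\<bar>real_of_int k - (- x / (hecke_lambda q * y))\<bar> * \<bar>hecke_lambda q * y\<bar> \<le> 1/2 * \<bar>hecke_lambda q * y\<bar>"
    by (intro mult_right_mono) auto
  moreover have "\<bar>real_of_int k - (- x / (hecke_lambda q * y))\<bar> * \<bar>hecke_lambda q * y\<bar> = \<bar>x + real_of_int k * hecke_lambda q * y\<bar>"
  proof -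
    have e: "(real_of_int k - (- x / (hecke_lambda q * y))) * (hecke_lambda q * y) = x + real_of_int k * hecke_lambda q * y"
      using l y0 by (simp add: field_simps)
    show ?thesis unfolding e[symmetric] abs_mult ..
  qed
  ultimately have "\<bar>x + real_of_int k * hecke_lambda q * y\<bar> \<le> 1/2 * \<bar>hecke_lambda q * y\<bar>"
    by linarith
  moreover have "\<bar>hecke_lambda q * y\<bar> = hecke_lambda q * \<bar>y\<bar>" using l by (simp add: abs_mult)
  ultimately have t: "\<bar>x + real_of_int k * hecke_lambda q * y\<bar> \<le> hecke_lambda q / 2 * \<bar>y\<bar>"
    by simp
  define A' where "A' = hecke_S ** (mat2 1 (real_of_int k * hecke_lambda q) 0 1 ** A)"
  have A'G: "A' \<in> hecke_group q" unfolding A'_def by (intro G_mul G_S G_Tpow A(1))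
  have "A' *v u = sS (mat2 1 (real_of_int k * hecke_lambda q) 0 1 *v vec2 x y)"
    unfolding A'_def x_def y_def by (simp add: matrix_vector_mul_assoc[symmetric] S_mulv vec2_eta[symmetric])
  then have "(A' *v u)$2 = x + real_of_int k * hecke_lambda q * y" by (simp add: sS_def)
  then have "\<bar>(A' *v u)$2\<bar> \<le> hecke_lambda q / 2 * ((hecke_lambda q / 2)^N * \<bar>u$2\<bar>)"
  proof -
    have "hecke_lambda q / 2 * \<bar>y\<bar> \<le> hecke_lambda q / 2 * ((hecke_lambda q / 2)^N * \<bar>u$2\<bar>)"
      using A(2) l unfolding y_def by (intro mult_left_mono) auto
    then show ?thesis using t \<open>(A' *v u)$2 = x + real_of_int k * hecke_lambda q * y\<close> by linarith
  qed
  then have "\<bar>(A' *v u)$2\<bar> \<le> (hecke_lambda q / 2)^(Suc N) * \<bar>u$2\<bar>" by (simp add: mult.assoc)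
  then show ?case using A'G by blast
qed



lemma norm_vec2_le: "norm (vec2 a b) \<le> \<bar>a\<bar> + \<bar>b\<bar>"
  using norm_le_l1_cart[of "vec2 a b"] by (simp add: sum_2)

lemma small_y: assumes "q \<ge> 3" and H: "\<forall>A\<in>hecke_group q. (A *v u)$2 \<noteq> 0" and d: "\<delta> > 0"
  shows "\<exists>A\<in>hecke_group q. \<bar>(A *v u)$2\<bar> < \<delta> \<and> (A *v u)$2 \<noteq> 0"
proof -
  have l: "1 \<le> hecke_lambda q" "hecke_lambda q < 2" using lam_bounds[OF assms(1)] by auto
  have "0 < \<delta> / (\<bar>u$2\<bar> + 1)" using d by simp
  then obtain N where N: "(hecke_lambda q / 2)^N < \<delta> / (\<bar>u$2\<bar> + 1)"
    using real_arch_pow_inv[of "\<delta> / (\<bar>u$2\<bar> + 1)" "hecke_lambda q / 2"] l by auto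
  obtain A where A: "A \<in> hecke_group q" "\<bar>(A *v u)$2\<bar> \<le> (hecke_lambda q / 2)^N * \<bar>u$2\<bar>"
    using descent[OF assms(1) H] by blast
  have "(hecke_lambda q / 2)^N * \<bar>u$2\<bar> \<le> (hecke_lambda q / 2)^N * (\<bar>u$2\<bar> + 1)"
    using l by (intro mult_left_mono) auto
  also have "\<dots> < \<delta>" using N by (simp add: pos_less_divide_eq)
  finally show ?thesis using A H by force
qed

lemma lagrange: fixes c11 c12 c21 c22 y s :: real
  assumes det: "c11 * c22 - c12 * c21 = 1" and na: "na = c11^2 + c21^2" and na0: "na > 0"
  and s: "s = y * (c11 * c12 + c21 * c22) / na"
  shows "(s * c11 - y * c12)^2 + (s * c21 - y * c22)^2 = y^2 / na"
proof -
  have sn: "s * na = y * (c11 * c12 + c21 * c22)" using s na0 by simp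
  have "na * ((s * c11 - y * c12)^2 + (s * c21 - y * c22)^2) = y^2"
    using sn det unfolding na by algebra
  then show ?thesis using na0 by (simp add: field_simps)
qed

lemma aux_lin: fixes l p ap n Q :: real
  shows "l * (-p) \<le> 2*ap \<Longrightarrow> 2*ap \<le> n \<Longrightarrow> Q = n - l*p \<Longrightarrow> l * (-p) = - (l*p) \<Longrightarrow> 1 \<le> Q \<Longrightarrow> 1 \<le> 2*n"
  by linarith

lemma not_discrete: assumes "q \<ge> 3" and H: "\<forall>A\<in>hecke_group q. (A *v u)$2 \<noteq> 0"
  shows "\<not> discrete (orbit q u)"
proof
  assume disc: "discrete (orbit q u)"
  have uo: "u \<in> orbit q u" unfolding orbit_def using id_G[of q] by force
  then have "u isolated_in orbit q u" using disc by (simp add: discrete_def)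
  then obtain e where e: "e > 0" "\<And>z. z \<in> orbit q u \<Longrightarrow> dist u z < e \<Longrightarrow> z = u"
    unfolding isolated_in_dist_Ex_iff by blast
  have l: "1 \<le> hecke_lambda q" "hecke_lambda q < 2" using lam_bounds[OF assms(1)] by auto
  obtain An where An: "An \<in> hecke_group q" "\<bar>(An *v u)$2\<bar> < e/3" "(An *v u)$2 \<noteq> 0"
    using small_y[OF assms(1) H, of "e/3"] e by auto
  define xn where "xn = (An *v u)$1"
  define yn where "yn = (An *v u)$2"
  obtain C where C: "C \<in> hecke_group q" "C ** An = mat 1" using G_linv[OF An(1)] by blast
  have uC: "u = C *v vec2 xn yn"
    using C(2) unfolding xn_def yn_def by (simp add: matrix_vector_mul_assoc vec2_eta[symmetric])
  define c11 where "c11 = C$1$1"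
  define c12 where "c12 = C$1$2"
  define c21 where "c21 = C$2$1"
  define c22 where "c22 = C$2$2"
  have Ceq: "C = mat2 c11 c12 c21 c22" unfolding c11_def c12_def c21_def c22_def by (rule mat2_eta)
  have det: "c11 * c22 - c12 * c21 = 1"
    using G_wedge[OF C(1), of "vec2 1 0" "vec2 0 1"] unfolding Ceq by (simp add: wedge_def)
  have aL: "vec2 c11 c21 \<in> hecke_Lambda q"
    unfolding Lambda_iff using C(1) Ceq by (intro bexI[of _ C]) auto
  define na where "na = c11^2 + c21^2"
  have Qa: "hecke_Q q (vec2 c11 c21) \<ge> 1" by (rule part2[OF assms(1) aL])
  have na2: "2 * na \<ge> 1"
  proof -
    have "hecke_lambda q * (- (c11 * c21)) \<le> 2 * \<bar>c11 * c21\<bar>"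
    proof -
      have "hecke_lambda q * (- (c11 * c21)) \<le> hecke_lambda q * \<bar>c11 * c21\<bar>" using l by (intro mult_left_mono) auto
      also have "\<dots> \<le> 2 * \<bar>c11 * c21\<bar>" using l by (intro mult_right_mono) auto
      finally show ?thesis .
    qed
    moreover have "2 * \<bar>c11 * c21\<bar> \<le> c11^2 + c21^2"
      using sum_squares_bound[of "\<bar>c11\<bar>" "\<bar>c21\<bar>"] by (simp add: abs_mult power2_eq_square)
    moreover have "hecke_Q q (vec2 c11 c21) = c11^2 + c21^2 - hecke_lambda q * (c11 * c21)"
      by (simp add: hecke_Q_def algebra_simps)
    moreover have "hecke_lambda q * (- (c11 * c21)) = - (hecke_lambda q * (c11 * c21))" by simp
    ultimately show ?thesis using Qa unfolding na_def by (metis aux_lin)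
  qed
  have na0: "na > 0" using na2 by simp
  define s where "s = yn * (c11 * c12 + c21 * c22) / na"
  define p where "p = C *v vec2 s (- yn)"
  have p: "p = vec2 (s * c11 - yn * c12) (s * c21 - yn * c22)" unfolding p_def Ceq by (simp add: algebra_simps)
  have np2: "(norm p)^2 = yn^2 / na"
    unfolding p norm_vec2 using lagrange[OF det na_def na0 s_def] na0 by simp
  define d where "d = norm p"
  have yn0: "yn \<noteq> 0" using An(3) yn_def by simp
  have "yn^2 / na > 0" using yn0 na0 by simp
  then have "norm p \<noteq> 0" using np2 by auto
  then have d0: "d > 0" unfolding d_def by simp
  have "d^2 \<le> (2 * \<bar>yn\<bar>)^2"
  proof -
    have "1 / na \<le> 2" using na2 na0 by (simp add: divide_le_eq)
    then have "yn^2 * (1 / na) \<le> yn^2 * 2" by (rule mult_left_mono) simp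
    then have "yn^2 / na \<le> 2 * yn^2" by simp
    have "d^2 = yn^2 / na" using np2 d_def by simp
    also have "\<dots> \<le> 2 * yn^2" by fact
    also have "\<dots> \<le> 4 * yn^2" using zero_le_power2[of yn] by linarith
    also have "\<dots> = (2 * \<bar>yn\<bar>)^2" by (simp add: power_mult_distrib)
    finally show ?thesis .
  qed
  then have d2: "d \<le> 2 * \<bar>yn\<bar>" by (rule power2_le_imp_le) simp
  obtain K where K: "K > 0" "\<And>v. norm (C *v v) \<le> norm v * K"
    using bounded_linear.pos_bounded[OF matrix_vector_mul_bounded_linear[of C]] by blast
  obtain Am where Am: "Am \<in> hecke_group q" "\<bar>(Am *v u)$2\<bar> < d / (8 * K)" "(Am *v u)$2 \<noteq> 0"
    using small_y[OF assms(1) H, of "d / (8 * K)"] d0 K(1) by auto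
  define xm where "xm = (Am *v u)$1"
  define ym where "ym = (Am *v u)$2"
  have ym0: "ym \<noteq> 0" using Am(3) ym_def by simp
  define t0 where "t0 = xn + s"
  define k where "k = round ((t0 - xm) / (hecke_lambda q * ym))"
  define t where "t = xm + real_of_int k * hecke_lambda q * ym"
  have tt0: "\<bar>t - t0\<bar> \<le> \<bar>ym\<bar>"
  proof -
    have "\<bar>real_of_int k - (t0 - xm) / (hecke_lambda q * ym)\<bar> \<le> 1/2" unfolding k_def by (rule of_int_round_abs_le)
    then have "\<bar>real_of_int k - (t0 - xm) / (hecke_lambda q * ym)\<bar> * \<bar>hecke_lambda q * ym\<bar> \<le> 1/2 * \<bar>hecke_lambda q * ym\<bar>"
      by (intro mult_right_mono) auto
    moreover have ee: "(real_of_int k - (t0 - xm) / (hecke_lambda q * ym)) * (hecke_lambda q * ym) = t - t0"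
      unfolding t_def using l ym0 by (simp add: field_simps)
    then have "\<bar>t - t0\<bar> = \<bar>real_of_int k - (t0 - xm) / (hecke_lambda q * ym)\<bar> * \<bar>hecke_lambda q * ym\<bar>"
      by (simp only: abs_mult[symmetric])
    moreover have "\<bar>hecke_lambda q * ym\<bar> = hecke_lambda q * \<bar>ym\<bar>" using l by (simp add: abs_mult)
    moreover have "hecke_lambda q * \<bar>ym\<bar> \<le> 2 * \<bar>ym\<bar>" using l by (intro mult_right_mono) auto
    ultimately show ?thesis by linarith
  qed
  define M where "M = mat2 1 (real_of_int k * hecke_lambda q) 0 1"
  define z where "z = (C ** (M ** Am)) *v u"
  have zo: "z \<in> orbit q u" unfolding z_def orbit_def M_def using G_mul[OF C(1) G_mul[OF G_Tpow Am(1)]] by blast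
  have z: "z = C *v vec2 t ym"
  proof -
    have "z = C *v (M *v (Am *v u))" unfolding z_def by (simp add: matrix_vector_mul_assoc)
    also have "Am *v u = vec2 xm ym" unfolding xm_def ym_def by (rule vec2_eta)
    finally show ?thesis unfolding M_def t_def by (simp add: mult.assoc)
  qed
  define \<rho> where "\<rho> = C *v vec2 (t - t0) ym"
  have zu: "z - u = p + \<rho>"
  proof -
    have "vec2 t ym - vec2 xn yn = vec2 s (- yn) + vec2 (t - t0) ym"
      unfolding t0_def by (simp add: vec_eq_iff forall_2)
    have "z - u = C *v (vec2 t ym - vec2 xn yn)" unfolding z uC by (rule matrix_vector_mult_diff_distrib[symmetric])
    also have "\<dots> = C *v (vec2 s (- yn) + vec2 (t - t0) ym)" using \<open>vec2 t ym - vec2 xn yn = _\<close> by simp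
    also have "\<dots> = p + \<rho>" unfolding p_def \<rho>_def by (rule matrix_vector_right_distrib)
    finally show ?thesis .
  qed
  have nr: "norm \<rho> < d / 4"
  proof -
    have "norm \<rho> \<le> norm (vec2 (t - t0) ym) * K" unfolding \<rho>_def by (rule K(2))
    also have "\<dots> \<le> (\<bar>t - t0\<bar> + \<bar>ym\<bar>) * K" using K(1) norm_vec2_le by (intro mult_right_mono) auto
    also have "\<dots> \<le> (2 * \<bar>ym\<bar>) * K" using tt0 K(1) by (intro mult_right_mono) auto
    also have "\<dots> < (2 * (d / (8 * K))) * K" using Am(2) K(1) ym_def by (intro mult_strict_right_mono) auto
    also have "\<dots> = d / 4" using K(1) by (simp add: field_simps)
    finally show ?thesis .
  qed
  have "norm p \<le> norm (z - u) + norm \<rho>" using norm_triangle_ineq[of "p + \<rho>" "- \<rho>"] zu by simp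
  then have "norm (z - u) > 0" using nr d0 d_def by linarith
  then have zne: "z \<noteq> u" by auto
  have "norm (z - u) \<le> norm p + norm \<rho>" unfolding zu by (rule norm_triangle_ineq)
  moreover have "dist u z = norm (z - u)" by (simp add: dist_norm norm_minus_commute)
  ultimately have "dist u z < e" using nr d2 d_def An(2) yn_def by linarith
  then show False using e(2)[OF zo] zne by blast
qed



theorem mainTheorem1:
  fixes q :: nat
  assumes "q \<ge> 3"
  shows
    "(\<forall>u :: real^2. discrete (orbit q u) \<longrightarrow>
        u = 0 \<or> (\<exists>\<alpha>::real. \<alpha> \<noteq> 0 \<and> orbit q u = (\<lambda>v. \<alpha> *\<^sub>R v) ` hecke_Lambda q))
   \<and> (\<forall>v \<in> hecke_Lambda q. \<not> hecke_Q q v < 1)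
   \<and> (\<forall>i. i \<le> q - 2 \<longrightarrow> wedge (hecke_w q i) (hecke_w q (i + 1)) = 1)
   \<and> wedge (hecke_w q 0) (hecke_w q (q - 1)) = 1
   \<and> (\<forall>u0 \<in> hecke_Lambda q. \<forall>u1 \<in> hecke_Lambda q. wedge u0 u1 = 1 \<longrightarrow>
        (\<exists>A \<in> hecke_group q. A *v u0 = vec2 1 0 \<and> A *v u1 = vec2 0 1)
        \<and> mat2 (u0$1) (u1$1) (u0$2) (u1$2) \<in> hecke_group q)"
proof (intro conjI allI impI ballI)
  fix u :: "real^2" assume d: "discrete (orbit q u)"
  show "u = 0 \<or> (\<exists>\<alpha>::real. \<alpha> \<noteq> 0 \<and> orbit q u = (\<lambda>v. \<alpha> *\<^sub>R v) ` hecke_Lambda q)"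
  proof (cases "u = 0")
    case False
    show ?thesis
    proof (cases "\<exists>A\<in>hecke_group q. (A *v u)$2 = 0")
      case True
      then obtain A where "A \<in> hecke_group q" "(A *v u)$2 = 0" by blast
      then show ?thesis using orbit_cusp False by blast
    next
      case False
      then show ?thesis using not_discrete[OF assms] d by blast
    qed
  qed simp
next
  fix v assume "v \<in> hecke_Lambda q"
  then show "\<not> hecke_Q q v < 1" using part2[OF assms] by force
next
  fix i :: nat
  show "wedge (hecke_w q i) (hecke_w q (i + 1)) = 1" by (rule part3a[OF assms])
next
  show "wedge (hecke_w q 0) (hecke_w q (q - 1)) = 1" by (rule part3b[OF assms])
next
  fix u0 u1 assume "u0 \<in> hecke_Lambda q" "u1 \<in> hecke_Lambda q" "wedge u0 u1 = 1"
  note p = part4[OF assms this]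
  show "\<exists>A \<in> hecke_group q. A *v u0 = vec2 1 0 \<and> A *v u1 = vec2 0 1" using p by blast
  show "mat2 (u0$1) (u1$1) (u0$2) (u1$2) \<in> hecke_group q" using p by blast
qed

end
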